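(* Let $n=2k$ be an even positive integer and $m$ a positive divisor of $n$. Let $u_1,\ldots,u_\tau\in\mathbb{F}_{2^n}$ be pairwise distinct, where $1\le\tau\le k$, and let $F(X_1,\ldots,X_\tau)$ be a reduced polynomial in $\mathbb{F}_2[X_1,\ldots,X_\tau]$. Let $G:\mathbb{F}_{2^n}\to\mathbb{F}_{2^m}$ be a vectorial bent function such that for every $\lambda\in\mathbb{F}_{2^m}^*$ with $\mathrm{Tr}^m_1(\lambda)=1$, the dual $G_\lambda^*$ of the component $G_\lambda$ satisfies $D_{u_i}D_{u_j}G_\lambda^*=0$ for all $1\le i<j\le\tau$. Then $H(x)=G(x)+F(\mathrm{Tr}^n_1(u_1x),\ldots,\mathrm{Tr}^n_1(u_\tau x))$ is a vectorial bent $(n,m)$-function.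
   Context: $\mathrm{Tr}^m_1(x)=\sum_{i=0}^{m-1}x^{2^i}$. For $\lambda\in\mathbb{F}_{2^m}^*$, $G_\lambda(x)=\mathrm{Tr}^m_1(\lambda G(x))$. For a Boolean function $f$ on $\mathbb{F}_{2^n}$, $W_f(a)=\sum_x(-1)^{f(x)+\mathrm{Tr}^n_1(ax)}$; $f$ is bent if $|W_f(a)|=2^{n/2}$ for all $a$, with dual $f^*$ given by $W_f(a)=2^{n/2}(-1)^{f^*(a)}$. $G$ is vectorial bent if every $G_\lambda$, $\lambda\ne0$, is bent. $D_aD_bf(x)=f(x)+f(x+a)+f(x+b)+f(x+a+b)$. A reduced polynomial is a multilinear polynomial $\sum_{I}a_I\prod_{i\in I}X_i$ over $\mathbb{F}_2$. The value of $F(\cdots)$ lies in $\mathbb{F}_2\subseteq\mathbb{F}_{2^m}$. *)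

theory Defs
  imports Main
begin

text \<open>The field F_{2^n} is modelled by a finite field type 'a with CARD('a) = 2^n.
  The subfield F_{2^m} (m dvd n) is the set of fixed points of x \<mapsto> x^(2^m).
  F_2 = {0,1} inside 'a; Boolean functions are 'a-valued functions with values in {0,1}.\<close>

definition tr :: "nat \<Rightarrow> 'a::field \<Rightarrow> 'a" where
  "tr k x = (\<Sum>i<k. x ^ (2 ^ i))"

definition subfield2 :: "nat \<Rightarrow> 'a::field set" where
  "subfield2 m = {x. x ^ (2 ^ m) = x}"

definition walsh :: "nat \<Rightarrow> ('a::{field,finite} \<Rightarrow> 'a) \<Rightarrow> 'a \<Rightarrow> int" where
  "walsh n f a = (\<Sum>x\<in>UNIV. (if f x + tr n (a * x) = 0 then 1 else -1))"

definition bool_fun :: "('a::field \<Rightarrow> 'a) \<Rightarrow> bool" where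
  "bool_fun f \<longleftrightarrow> (\<forall>x. f x \<in> {0, 1})"

definition bent :: "nat \<Rightarrow> ('a::{field,finite} \<Rightarrow> 'a) \<Rightarrow> bool" where
  "bent n f \<longleftrightarrow> bool_fun f \<and> (\<forall>a. \<bar>walsh n f a\<bar> = 2 ^ (n div 2))"

definition dual :: "nat \<Rightarrow> ('a::{field,finite} \<Rightarrow> 'a) \<Rightarrow> 'a \<Rightarrow> 'a" where
  "dual n f a = (if walsh n f a = 2 ^ (n div 2) then 0 else 1)"

definition component :: "nat \<Rightarrow> ('a::field \<Rightarrow> 'a) \<Rightarrow> 'a \<Rightarrow> 'a \<Rightarrow> 'a" where
  "component m G l x = tr m (l * G x)"

definition vectorial_bent :: "nat \<Rightarrow> nat \<Rightarrow> ('a::{field,finite} \<Rightarrow> 'a) \<Rightarrow> bool" where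
  "vectorial_bent n m G \<longleftrightarrow> (\<forall>x. G x \<in> subfield2 m) \<and>
     (\<forall>l\<in>subfield2 m - {0}. bent n (component m G l))"

definition second_deriv :: "('a::field \<Rightarrow> 'a) \<Rightarrow> 'a \<Rightarrow> 'a \<Rightarrow> 'a \<Rightarrow> 'a" where
  "second_deriv f a b x = f x + f (x + a) + f (x + b) + f (x + a + b)"

text \<open>Reduced polynomial in X_1..X_tau over F_2, given by its coefficients c I \<in> {0,1}
  for I \<subseteq> {1..tau}; evaluation sum_I c_I prod_{i in I} y_i.\<close>
definition reduced_poly :: "nat \<Rightarrow> (nat set \<Rightarrow> 'a::field) \<Rightarrow> bool" where
  "reduced_poly \<tau> c \<longleftrightarrow> (\<forall>I. c I \<in> {0, 1}) \<and> (\<forall>I. \<not> I \<subseteq> {1..\<tau>} \<longrightarrow> c I = 0)"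

definition eval_reduced :: "nat \<Rightarrow> (nat set \<Rightarrow> 'a::field) \<Rightarrow> (nat \<Rightarrow> 'a) \<Rightarrow> 'a" where
  "eval_reduced \<tau> c y = (\<Sum>I\<in>Pow {1..\<tau>}. c I * (\<Prod>i\<in>I. y i))"

end

theory Submission
  imports Defs
begin

lemma fin_pow_card:
  fixes x :: "'a::{field,finite}"
  shows "x ^ card (UNIV::'a set) = x"
proof (cases "x = 0")
  case True
  then show ?thesis by (simp add: finite_UNIV_card_ge_0)
next
  case False
  let ?A = "UNIV - {0::'a}"
  have inj: "inj_on (\<lambda>y. x * y) ?A" using False by (auto simp: inj_on_def)
  have img: "(\<lambda>y. x * y) ` ?A = ?A"
  proof
    show "(\<lambda>y. x * y) ` ?A \<subseteq> ?A" using False by auto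
    show "?A \<subseteq> (\<lambda>y. x * y) ` ?A"
    proof
      fix z assume z: "z \<in> ?A"
      have "z = x * (z / x)" using False by simp
      moreover have "z / x \<in> ?A" using z False by simp
      ultimately show "z \<in> (\<lambda>y. x * y) ` ?A" by blast
    qed
  qed
  have "(\<Prod>y\<in>?A. y) = (\<Prod>y\<in>(\<lambda>y. x * y) ` ?A. y)" using img by simp
  also have "\<dots> = (\<Prod>y\<in>?A. x * y)" using prod.reindex[OF inj] by simp
  also have "\<dots> = x ^ card ?A * (\<Prod>y\<in>?A. y)" by (simp add: prod.distrib)
  finally have e: "x ^ card ?A * (\<Prod>y\<in>?A. y) = 1 * (\<Prod>y\<in>?A. y)" by simp
  have nz: "(\<Prod>y\<in>?A. y) \<noteq> 0" by simp
  have "x ^ card ?A = 1" using e nz by (metis mult_cancel_right)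
  moreover have "card ?A = card (UNIV::'a set) - 1" by (simp add: card_Diff_singleton)
  moreover have "card (UNIV::'a set) = Suc (card (UNIV::'a set) - 1)" using finite_UNIV_card_ge_0[where 'a='a] by simp
  ultimately show ?thesis by (metis power_Suc mult_1_right)
qed

lemma add_self: "(1::'a::field) + 1 = 0 \<Longrightarrow> x + x = (0::'a)"
proof -
  assume h: "(1::'a) + 1 = 0"
  have "x + x = (1 + 1) * x" by (simp add: distrib_right)
  then show ?thesis using h by simp
qed

lemma neg_self: "(1::'a::field) + 1 = 0 \<Longrightarrow> - x = (x::'a)"
  using add_self[of x] by (simp add: add_eq_0_iff2 eq_neg_iff_add_eq_0)

lemma sq_add: "(1::'a::field) + 1 = 0 \<Longrightarrow> (x + y) ^ 2 = x ^ 2 + (y::'a) ^ 2"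
proof -
  assume h: "(1::'a) + 1 = 0"
  have "(x + y) ^ 2 = x ^ 2 + y ^ 2 + (x * y + x * y)"
    by (simp add: power2_eq_square algebra_simps)
  then show ?thesis using add_self[OF h, of "x*y"] by simp
qed

lemma pow2_add: "(1::'a::field) + 1 = 0 \<Longrightarrow> (x + y) ^ (2 ^ j) = x ^ (2 ^ j) + (y::'a) ^ (2 ^ j)"
proof (induction j)
  case 0
  then show ?case by simp
next
  case (Suc j)
  have "(x + y) ^ (2 ^ Suc j) = ((x + y) ^ (2 ^ j)) ^ 2"
    by (simp add: power_mult[symmetric] mult.commute)
  also have "\<dots> = (x ^ (2 ^ j) + y ^ (2 ^ j)) ^ 2" using Suc by simp
  also have "\<dots> = (x ^ (2 ^ j)) ^ 2 + (y ^ (2 ^ j)) ^ 2" using sq_add[OF Suc.prems] by simp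
  also have "\<dots> = x ^ (2 ^ Suc j) + y ^ (2 ^ Suc j)"
    by (simp add: power_mult[symmetric] mult.commute)
  finally show ?case .
qed

lemma zero_pow2: "(0::'a::field) ^ (2 ^ i) = 0"
  by simp

lemma pow2_sum: assumes h: "(1::'a::field) + 1 = 0" and fin: "finite A" shows
   "(\<Sum>i\<in>A. f i) ^ (2 ^ j) = (\<Sum>i\<in>A. (f i :: 'a) ^ (2 ^ j))"
  using fin proof (induction A rule: finite_induct)
  case empty
  then show ?case by simp
next
  case (insert x F)
  then show ?case using h by (simp add: pow2_add)
qed

lemma tr_add: "(1::'a::field) + 1 = 0 \<Longrightarrow> tr k (x + y) = tr k x + tr k (y::'a)"
  unfolding tr_def by (simp add: pow2_add sum.distrib)

lemma tr_zero: "tr k (0::'a::field) = 0"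
  unfolding tr_def by (simp add: zero_pow2)

lemma tr_sum: assumes h: "(1::'a::field) + 1 = 0" and fin: "finite A" shows
   "tr k (\<Sum>i\<in>A. f i) = (\<Sum>i\<in>A. tr k (f i :: 'a))"
  using fin proof (induction A rule: finite_induct)
  case empty
  then show ?case by (simp add: tr_zero)
next
  case (insert x F)
  then show ?case using h by (simp add: tr_add)
qed

lemma sq01: "(y::'a::field) ^ 2 = y \<Longrightarrow> y \<in> {0, 1}"
proof -
  assume h: "y ^ 2 = y"
  have "y * (y - 1) = 0" using h by (simp add: power2_eq_square algebra_simps)
  then show ?thesis by auto
qed

lemma tr_idem: "(1::'a::field) + 1 = 0 \<Longrightarrow> x ^ (2 ^ k) = x \<Longrightarrow> tr k (x::'a) \<in> {0, 1}"
proof -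
  assume h: "(1::'a) + 1 = 0" and x: "x ^ (2 ^ k) = x"
  have "(tr k x) ^ 2 = (\<Sum>i<k. (x ^ (2 ^ i)) ^ (2 ^ 1))"
    unfolding tr_def using pow2_sum[OF h, of "{..<k}" "\<lambda>i. x ^ (2 ^ i)" 1] by simp
  also have "\<dots> = (\<Sum>i<k. x ^ (2 ^ Suc i))"
    by (simp add: power_mult[symmetric] mult.commute)
  also have "\<dots> = tr k x"
  proof -
    have "(\<Sum>i<Suc k. x ^ (2 ^ i)) = x ^ (2 ^ 0) + (\<Sum>i<k. x ^ (2 ^ Suc i))"
      by (rule sum.lessThan_Suc_shift)
    moreover have "(\<Sum>i<Suc k. x ^ (2 ^ i)) = (\<Sum>i<k. x ^ (2 ^ i)) + x ^ (2 ^ k)"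
      by simp
    ultimately show ?thesis unfolding tr_def using x by (simp add: add.commute)
  qed
  finally show ?thesis by (rule sq01)
qed

lemma sum01: assumes h: "(1::'a::field) + 1 = 0" and fin: "finite A" shows "(\<forall>i\<in>A. f i \<in> {0, 1}) \<Longrightarrow>
   (\<Sum>i\<in>A. f i :: 'a) \<in> {0, 1}"
  using fin proof (induction A rule: finite_induct)
  case empty
  then show ?case by simp
next
  case (insert x F)
  then show ?case using h by auto
qed

lemma prod01: assumes fin: "finite A" shows "(\<forall>i\<in>A. f i \<in> {0, 1}) \<Longrightarrow>
   (\<Prod>i\<in>A. f i :: 'a::field) \<in> {0, 1}"
  using fin proof (induction A rule: finite_induct)
  case empty
  then show ?case by simp
next
  case (insert x F)
  then show ?case by auto
qed

definition chi :: "'a::field \<Rightarrow> int" where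
  "chi v = (if v = 0 then 1 else -1)"

lemma chi_add: "(1::'a::field) + 1 = 0 \<Longrightarrow> v \<in> {0, 1} \<Longrightarrow> w \<in> {0, 1} \<Longrightarrow>
   chi (v + w :: 'a) = chi v * chi w"
  unfolding chi_def by auto

lemma chi_abs: "\<bar>chi v\<bar> = 1"
  unfolding chi_def by simp

lemma chi_sum: assumes h: "(1::'a::field) + 1 = 0" and fin: "finite A" shows "(\<forall>i\<in>A. f i \<in> {0, 1}) \<Longrightarrow>
   chi (\<Sum>i\<in>A. f i :: 'a) = (\<Prod>i\<in>A. chi (f i))"
  using fin proof (induction A rule: finite_induct)
  case empty
  then show ?case by (simp add: chi_def)
next
  case (insert x F)
  have s: "sum f F \<in> {0,1}" using sum01[OF h insert(1)] insert(4) by auto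
  have "chi (f x + sum f F) = chi (f x) * chi (sum f F)" using chi_add[OF h _ s] insert(4) by auto
  then show ?case using insert by simp
qed

lemma walsh_chi: "walsh n f a = (\<Sum>x\<in>UNIV. chi (f x + tr n (a * x)))"
  unfolding walsh_def chi_def by simp

lemma char_sum:
  assumes h: "(1::'a::field) + 1 = 0" and fin: "finite A" and z01: "\<forall>i\<in>A. z i \<in> {0, 1}"
  shows "(\<Sum>S\<in>Pow A. chi (\<Sum>i\<in>S. z i :: 'a)) = (if \<forall>i\<in>A. z i = 0 then 2 ^ card A else 0)"
proof -
  have "(\<Sum>S\<in>Pow A. chi (\<Sum>i\<in>S. z i :: 'a)) = (\<Sum>S\<in>Pow A. (\<Prod>i\<in>S. chi (z i)) * (\<Prod>i\<in>A - S. 1))"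
  proof (rule sum.cong)
    fix S assume S: "S \<in> Pow A"
    then have "finite S" using fin finite_subset by auto
    then show "chi (\<Sum>i\<in>S. z i :: 'a) = (\<Prod>i\<in>S. chi (z i)) * (\<Prod>i\<in>A - S. 1)"
      using chi_sum[OF h, of S z] z01 S by auto
  qed simp
  also have "\<dots> = (\<Prod>i\<in>A. chi (z i) + 1)" by (rule prod_add[OF fin, symmetric])
  also have "\<dots> = (if \<forall>i\<in>A. z i = 0 then 2 ^ card A else 0)"
  proof (cases "\<forall>i\<in>A. z i = 0")
    case True
    then have "(\<Prod>i\<in>A. chi (z i) + 1) = (\<Prod>i\<in>A. 2)" by (simp add: chi_def)
    then show ?thesis using True by simp
  next
    case False
    then obtain i where i: "i \<in> A" "z i \<noteq> 0" by auto
    then have "chi (z i) + 1 = 0" by (simp add: chi_def)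
    then have "(\<Prod>i\<in>A. chi (z i) + 1) = 0" using i fin by (meson prod_zero)
    then show ?thesis using False by simp
  qed
  finally show ?thesis .
qed

definition ind :: "nat set \<Rightarrow> nat \<Rightarrow> 'a::field" where
  "ind T i = (if i \<in> T then 1 else 0)"

lemma eval_cong: "(\<forall>i\<in>{1..\<tau>}. y i = y' i) \<Longrightarrow> eval_reduced \<tau> c y = eval_reduced \<tau> c y'"
  unfolding eval_reduced_def
  by (intro sum.cong refl arg_cong2[where f="(*)"] prod.cong) auto

lemma eval01:
  assumes h: "(1::'a::field) + 1 = 0" and red: "reduced_poly \<tau> c"
    and y01: "\<forall>i\<in>{1..\<tau>}. y i \<in> {0, 1}"
  shows "eval_reduced \<tau> c (y :: nat \<Rightarrow> 'a) \<in> {0, 1}"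
  unfolding eval_reduced_def
proof (rule sum01[OF h], simp, intro ballI)
  fix I assume I: "I \<in> Pow {1..\<tau>}"
  then have fI: "finite I" using finite_subset by auto
  have "(\<Prod>i\<in>I. y i) \<in> {0, 1}" using prod01[OF fI, of y] y01 I by auto
  moreover have "c I \<in> {0, 1}" using red unfolding reduced_poly_def by auto
  ultimately show "c I * (\<Prod>i\<in>I. y i) \<in> {0, 1}" by auto
qed

lemma expansion:
  assumes h: "(1::'a::field) + 1 = 0" and y01: "\<forall>i\<in>{1..\<tau>}. y i \<in> {0, 1}"
  shows "2 ^ \<tau> * chi (eval_reduced \<tau> c (y :: nat \<Rightarrow> 'a)) =
    (\<Sum>S\<in>Pow {1..\<tau>}. \<Sum>T\<in>Pow {1..\<tau>}. chi (eval_reduced \<tau> c (ind T :: nat \<Rightarrow> 'a)) *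
        chi (\<Sum>i\<in>S. ind T i :: 'a) * chi (\<Sum>i\<in>S. y i))"
proof -
  let ?P = "Pow {1..\<tau>}"
  let ?F = "\<lambda>T. chi (eval_reduced \<tau> c (ind T :: nat \<Rightarrow> 'a))"
  define T0 where "T0 = {i \<in> {1..\<tau>}. y i = 1}"
  have ind01: "\<And>T i. (ind T i :: 'a) \<in> {0, 1}" unfolding ind_def by auto
  have "(\<Sum>S\<in>?P. \<Sum>T\<in>?P. ?F T * chi (\<Sum>i\<in>S. ind T i :: 'a) * chi (\<Sum>i\<in>S. y i))
      = (\<Sum>T\<in>?P. \<Sum>S\<in>?P. ?F T * chi (\<Sum>i\<in>S. ind T i :: 'a) * chi (\<Sum>i\<in>S. y i))"
    by (rule sum.swap)
  also have "\<dots> = (\<Sum>T\<in>?P. ?F T * (\<Sum>S\<in>?P. chi (\<Sum>i\<in>S. ind T i + y i :: 'a)))"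
  proof (rule sum.cong[OF refl])
    fix T assume T: "T \<in> ?P"
    have "(\<Sum>S\<in>?P. ?F T * chi (\<Sum>i\<in>S. ind T i :: 'a) * chi (\<Sum>i\<in>S. y i))
        = (\<Sum>S\<in>?P. ?F T * chi (\<Sum>i\<in>S. ind T i + y i :: 'a))"
    proof (rule sum.cong[OF refl])
      fix S assume S: "S \<in> ?P"
      then have fS: "finite S" using finite_subset by auto
      have a: "(\<Sum>i\<in>S. ind T i :: 'a) \<in> {0,1}" using sum01[OF h fS] ind01 by auto
      have b: "(\<Sum>i\<in>S. y i) \<in> {0,1}" using sum01[OF h fS, of y] y01 S by auto
      have "chi (\<Sum>i\<in>S. ind T i + y i :: 'a) = chi (\<Sum>i\<in>S. ind T i :: 'a) * chi (\<Sum>i\<in>S. y i)"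
        using chi_add[OF h a b] by (simp add: sum.distrib)
      then show "?F T * chi (\<Sum>i\<in>S. ind T i :: 'a) * chi (\<Sum>i\<in>S. y i) = ?F T * chi (\<Sum>i\<in>S. ind T i + y i :: 'a)"
        by simp
    qed
    then show "(\<Sum>S\<in>?P. ?F T * chi (\<Sum>i\<in>S. ind T i :: 'a) * chi (\<Sum>i\<in>S. y i))
        = ?F T * (\<Sum>S\<in>?P. chi (\<Sum>i\<in>S. ind T i + y i :: 'a))"
      by (simp add: sum_distrib_left)
  qed
  also have "\<dots> = (\<Sum>T\<in>?P. if T = T0 then ?F T * 2 ^ \<tau> else 0)"
  proof (rule sum.cong[OF refl])
    fix T assume T: "T \<in> ?P"
    have z01: "\<forall>i\<in>{1..\<tau>}. (ind T i + y i :: 'a) \<in> {0, 1}"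
      using y01 h unfolding ind_def by auto
    have iff: "(\<forall>i\<in>{1..\<tau>}. (ind T i + y i :: 'a) = 0) \<longleftrightarrow> T = T0"
    proof
      assume a: "\<forall>i\<in>{1..\<tau>}. (ind T i + y i :: 'a) = 0"
      show "T = T0"
      proof
        show "T \<subseteq> T0"
        proof
          fix i assume i: "i \<in> T"
          then have i1: "i \<in> {1..\<tau>}" using T by auto
          then have "ind T i + y i = (0::'a)" using a by blast
          then have "1 + y i = 0" using i unfolding ind_def by simp
          moreover have "y i \<in> {0,1}" using y01 i1 by blast
          ultimately have "y i = 1" by auto
          then show "i \<in> T0" using i1 unfolding T0_def by auto
        qed
        show "T0 \<subseteq> T"
        proof
          fix i assume i: "i \<in> T0"
          then have "y i = 1" "i \<in> {1..\<tau>}" unfolding T0_def by auto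
          then show "i \<in> T" using a h unfolding ind_def by (auto split: if_splits)
        qed
      qed
    next
      assume "T = T0"
      then show "\<forall>i\<in>{1..\<tau>}. (ind T i + y i :: 'a) = 0"
        using y01 h unfolding ind_def T0_def by auto
    qed
    show "?F T * (\<Sum>S\<in>?P. chi (\<Sum>i\<in>S. ind T i + y i :: 'a)) = (if T = T0 then ?F T * 2 ^ \<tau> else 0)"
      using char_sum[OF h _ z01] iff by simp
  qed
  also have "\<dots> = ?F T0 * 2 ^ \<tau>"
    by (subst sum.delta) (auto simp: T0_def)
  also have "?F T0 = chi (eval_reduced \<tau> c y)"
  proof -
    have "\<forall>i\<in>{1..\<tau>}. (ind T0 i :: 'a) = y i"
      using y01 unfolding ind_def T0_def by auto
    then show ?thesis using eval_cong[of \<tau> "ind T0" y c] by simp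
  qed
  finally show ?thesis by simp
qed

lemma c2_aux1:
  assumes h: "(1::'a::field) + 1 = 0" and h1: "A + B = C + D" and h2: "E + F + D + C = (0::'a)"
  shows "A + B = F + E"
proof -
  have "A + B = C + D + (E + F + D + C)" using h1 h2 by simp
  also have "\<dots> = E + F + (C + C) + (D + D)" by (simp add: ac_simps)
  also have "\<dots> = F + E" using add_self[OF h, of C] add_self[OF h, of D] by (metis add.commute add.right_neutral)
  finally show ?thesis .
qed

lemma c2_aux2:
  assumes h: "(1::'a::field) + 1 = 0" and h1: "X + Y = Z" and h2: "Y = W + (s::'a)"
  shows "X = W + (Z + s)"
proof -
  have "X = X + (Y + Y)" using add_self[OF h, of Y] by (metis add.right_neutral)
  also have "\<dots> = (X + Y) + Y" by (simp add: ac_simps)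
  also have "\<dots> = W + (Z + s)" using h1 h2 by (simp add: ac_simps)
  finally show ?thesis .
qed

lemma shift:
  assumes h: "(1::'a::field) + 1 = 0"
    and dd: "\<forall>i j b. i \<in> {1..\<tau>} \<and> j \<in> {1..\<tau>} \<and> i \<noteq> j \<longrightarrow>
        gs b + gs (b + u i) + gs (b + u j) + gs (b + u i + u j) = (0::'a)"
    and fin: "finite S"
  shows "S \<subseteq> {1..\<tau>} \<Longrightarrow> i \<in> {1..\<tau>} \<Longrightarrow> i \<notin> S \<Longrightarrow>
    \<forall>b. gs (b + (\<Sum>j\<in>S. u j) + u i) + gs (b + (\<Sum>j\<in>S. u j)) = gs (b + u i) + gs b"
  using fin
proof (induction S rule: finite_induct)
  case empty
  then show ?case by simp
next
  case (insert j S)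
  show ?case
  proof
    fix b
    have IH: "gs (b + u j + (\<Sum>j\<in>S. u j) + u i) + gs (b + u j + (\<Sum>j\<in>S. u j))
        = gs (b + u j + u i) + gs (b + u j)"
      using insert by blast
    have ji: "j \<in> {1..\<tau>}" "j \<noteq> i" using insert by auto
    have D: "gs b + gs (b + u i) + gs (b + u j) + gs (b + u i + u j) = 0"
      using dd insert(5) ji by blast
    have e1: "b + u j + u i = b + u i + u j" by (simp add: ac_simps)
    have "gs (b + u j + (\<Sum>j\<in>S. u j) + u i) + gs (b + u j + (\<Sum>j\<in>S. u j))
        = gs (b + u i) + gs b"
      using c2_aux1[OF h IH[unfolded e1] D] .
    moreover have "(\<Sum>j\<in>insert j S. u j) = u j + (\<Sum>j\<in>S. u j)" using insert by simp
    ultimately show "gs (b + (\<Sum>j\<in>insert j S. u j) + u i) + gs (b + (\<Sum>j\<in>insert j S. u j)) = gs (b + u i) + gs b"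
      by (simp add: add.assoc)
  qed
qed

lemma dual_lin:
  assumes h: "(1::'a::field) + 1 = 0"
    and dd: "\<forall>i j b. i \<in> {1..\<tau>} \<and> j \<in> {1..\<tau>} \<and> i \<noteq> j \<longrightarrow>
        gs b + gs (b + u i) + gs (b + u j) + gs (b + u i + u j) = (0::'a)"
    and fin: "finite S"
  shows "S \<subseteq> {1..\<tau>} \<Longrightarrow>
    gs (a + (\<Sum>j\<in>S. u j)) = gs a + (\<Sum>i\<in>S. gs (a + u i) + gs a)"
  using fin
proof (induction S rule: finite_induct)
  case empty
  then show ?case by simp
next
  case (insert i S)
  have sh: "gs (a + (\<Sum>j\<in>S. u j) + u i) + gs (a + (\<Sum>j\<in>S. u j)) = gs (a + u i) + gs a"
    using shift[OF h dd insert(1), of i] insert by blast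
  have IH: "gs (a + (\<Sum>j\<in>S. u j)) = gs a + (\<Sum>i\<in>S. gs (a + u i) + gs a)"
    using insert by blast
  have "gs (a + (\<Sum>j\<in>S. u j) + u i) = gs a + ((gs (a + u i) + gs a) + (\<Sum>i\<in>S. gs (a + u i) + gs a))"
    by (rule c2_aux2[OF h sh IH])
  moreover have "(\<Sum>j\<in>insert i S. u j) = u i + (\<Sum>j\<in>S. u j)" using insert by simp
  ultimately show ?case using insert by (simp add: ac_simps)
qed

lemma add01: "(1::'a::field) + 1 = 0 \<Longrightarrow> v \<in> {0,1} \<Longrightarrow> w \<in> {0,1} \<Longrightarrow> (v + w :: 'a) \<in> {0,1}"
  by auto

lemma main_bent:
  fixes g :: "'a::{field,finite} \<Rightarrow> 'a" and u :: "nat \<Rightarrow> 'a" and c :: "nat set \<Rightarrow> 'a"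
  assumes h: "(1::'a) + 1 = 0" and frob: "\<forall>x::'a. x ^ (2 ^ n) = x" and gb: "bent n g"
    and dd: "\<forall>i j. 1 \<le> i \<and> i < j \<and> j \<le> \<tau> \<longrightarrow> (\<forall>x. second_deriv (dual n g) (u i) (u j) x = 0)"
    and red: "reduced_poly \<tau> c"
  shows "bent n (\<lambda>x. g x + eval_reduced \<tau> c (\<lambda>i. tr n (u i * x)))"
proof -
  define gs where "gs = dual n g"
  define hh where "hh = n div 2"
  have gs01: "\<And>x. gs x \<in> {0,1}" by (simp add: gs_def dual_def)
  have g01: "\<And>x. g x \<in> {0,1}" using gb by (simp add: bent_def bool_fun_def)
  have W: "\<And>b. walsh n g b = 2 ^ hh * chi (gs b)"
  proof -
    fix b
    have "\<bar>walsh n g b\<bar> = 2 ^ hh" using gb by (simp add: bent_def hh_def)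
    then have "walsh n g b = 2 ^ hh \<or> walsh n g b = - (2 ^ hh)" by (auto simp: abs_if split: if_splits)
    moreover have "(2::int) ^ hh \<noteq> - (2 ^ hh)" by simp
    ultimately show "walsh n g b = 2 ^ hh * chi (gs b)"
      unfolding gs_def dual_def chi_def hh_def by auto
  qed
  have dd': "\<forall>i j b. i \<in> {1..\<tau>} \<and> j \<in> {1..\<tau>} \<and> i \<noteq> j \<longrightarrow>
        gs b + gs (b + u i) + gs (b + u j) + gs (b + u i + u j) = 0"
  proof (intro allI impI)
    fix i j b assume ij: "i \<in> {1..\<tau>} \<and> j \<in> {1..\<tau>} \<and> i \<noteq> j"
    show "gs b + gs (b + u i) + gs (b + u j) + gs (b + u i + u j) = 0"
    proof (cases "i < j")
      case True
      have "1 \<le> i \<and> i < j \<and> j \<le> \<tau>" using ij True by auto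
      then have "second_deriv (dual n g) (u i) (u j) b = 0" using dd by blast
      then show ?thesis by (simp add: second_deriv_def gs_def)
    next
      case False
      then have "j < i" using ij by auto
      then have "1 \<le> j \<and> j < i \<and> i \<le> \<tau>" using ij by auto
      then have "second_deriv (dual n g) (u j) (u i) b = 0" using dd by blast
      then show ?thesis by (simp add: second_deriv_def gs_def ac_simps)
    qed
  qed
  have L01: "tr n (v * x :: 'a) \<in> {0,1}" for x v using tr_idem[OF h, of "v * x" n] frob by simp
  have e01: "eval_reduced \<tau> c (\<lambda>i. tr n (u i * x)) \<in> {0,1}" for x
    using eval01[OF h red, of "\<lambda>i. tr n (u i * x)"] L01 by simp
  have bf: "bool_fun (\<lambda>x. g x + eval_reduced \<tau> c (\<lambda>i. tr n (u i * x)))"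
    unfolding bool_fun_def by (intro allI add01[OF h g01 e01])
  have "\<bar>walsh n (\<lambda>x. g x + eval_reduced \<tau> c (\<lambda>i. tr n (u i * x))) a\<bar> = 2 ^ (n div 2)" for a
  proof -
    define \<delta> where "\<delta> i = gs (a + u i) + gs a" for i
    have \<delta>01: "\<forall>i\<in>{1..\<tau>}. \<delta> i \<in> {0,1}" unfolding \<delta>_def using add01[OF h gs01 gs01] by blast
    have lin: "\<And>S. S \<in> Pow {1..\<tau>} \<Longrightarrow> gs (a + (\<Sum>j\<in>S. u j)) = gs a + (\<Sum>i\<in>S. \<delta> i)"
    proof -
      fix S assume S: "S \<in> Pow {1..\<tau>}"
      then have fS: "finite S" and sS: "S \<subseteq> {1..\<tau>}" using finite_subset by auto
      show "gs (a + (\<Sum>j\<in>S. u j)) = gs a + (\<Sum>i\<in>S. \<delta> i)"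
        unfolding \<delta>_def by (rule dual_lin[OF h dd' fS sS])
    qed
    let ?P = "Pow {1..\<tau>}"
    let ?K = "\<lambda>T S. chi (eval_reduced \<tau> c (ind T :: nat \<Rightarrow> 'a)) * chi (\<Sum>i\<in>S. ind T i :: 'a)"
    let ?e = "\<lambda>x. eval_reduced \<tau> c (\<lambda>i. tr n (u i * x))"
    have trS: "\<And>S x. S \<in> ?P \<Longrightarrow> (\<Sum>i\<in>S. tr n (u i * x)) = tr n ((\<Sum>j\<in>S. u j) * x)"
    proof -
      fix S x assume "S \<in> ?P"
      then have "finite S" using finite_subset by auto
      then show "(\<Sum>i\<in>S. tr n (u i * x)) = tr n ((\<Sum>j\<in>S. u j) * x)"
        using tr_sum[OF h \<open>finite S\<close>, of n "\<lambda>i. u i * x"] by (simp add: sum_distrib_right)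
    qed
    have key: "\<And>x. 2 ^ \<tau> * chi (?e x) = (\<Sum>S\<in>?P. \<Sum>T\<in>?P. ?K T S * chi (tr n ((\<Sum>j\<in>S. u j) * x)))"
    proof -
      fix x
      have "2 ^ \<tau> * chi (?e x) = (\<Sum>S\<in>?P. \<Sum>T\<in>?P. ?K T S * chi (\<Sum>i\<in>S. tr n (u i * x)))"
        using expansion[OF h, of \<tau> "\<lambda>i. tr n (u i * x)" c] L01 by simp
      also have "\<dots> = (\<Sum>S\<in>?P. \<Sum>T\<in>?P. ?K T S * chi (tr n ((\<Sum>j\<in>S. u j) * x)))"
        using trS by simp
      finally show "2 ^ \<tau> * chi (?e x) = (\<Sum>S\<in>?P. \<Sum>T\<in>?P. ?K T S * chi (tr n ((\<Sum>j\<in>S. u j) * x)))" .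
    qed
    have comb: "\<And>x b. chi (g x + tr n (a * x)) * chi (tr n (b * x)) = chi (g x + tr n ((a + b) * x))"
    proof -
      fix x b
      have "chi ((g x + tr n (a * x)) + tr n (b * x)) = chi (g x + tr n (a * x)) * chi (tr n (b * x))"
        by (rule chi_add[OF h add01[OF h g01 L01] L01])
      moreover have "tr n ((a + b) * x) = tr n (a * x) + tr n (b * x)"
        by (simp add: distrib_right tr_add[OF h])
      ultimately show "chi (g x + tr n (a * x)) * chi (tr n (b * x)) = chi (g x + tr n ((a + b) * x))"
        by (simp add: add.assoc)
    qed
    have w1: "walsh n (\<lambda>x. g x + ?e x) a = (\<Sum>x\<in>UNIV. chi (g x + tr n (a * x)) * chi (?e x))"
      unfolding walsh_chi
    proof (rule sum.cong[OF refl])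
      fix x
      have "chi ((g x + tr n (a * x)) + ?e x) = chi (g x + tr n (a * x)) * chi (?e x)"
        by (rule chi_add[OF h add01[OF h g01 L01] e01])
      then show "chi (g x + ?e x + tr n (a * x)) = chi (g x + tr n (a * x)) * chi (?e x)"
        by (simp add: ac_simps)
    qed
    have "2 ^ \<tau> * walsh n (\<lambda>x. g x + ?e x) a = (\<Sum>x\<in>UNIV. chi (g x + tr n (a * x)) * (2 ^ \<tau> * chi (?e x)))"
      unfolding w1 by (simp add: sum_distrib_left ac_simps)
    also have "\<dots> = (\<Sum>x\<in>UNIV. \<Sum>S\<in>?P. \<Sum>T\<in>?P. ?K T S * chi (g x + tr n ((a + (\<Sum>j\<in>S. u j)) * x)))"
    proof (rule sum.cong[OF refl])
      fix x
      have "chi (g x + tr n (a * x)) * (2 ^ \<tau> * chi (?e x)) =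
          chi (g x + tr n (a * x)) * (\<Sum>S\<in>?P. \<Sum>T\<in>?P. ?K T S * chi (tr n ((\<Sum>j\<in>S. u j) * x)))"
        by (simp only: key)
      also have "\<dots> = (\<Sum>S\<in>?P. \<Sum>T\<in>?P. ?K T S * (chi (g x + tr n (a * x)) * chi (tr n ((\<Sum>j\<in>S. u j) * x))))"
        by (simp only: sum_distrib_left mult.left_commute)
      also have "\<dots> = (\<Sum>S\<in>?P. \<Sum>T\<in>?P. ?K T S * chi (g x + tr n ((a + (\<Sum>j\<in>S. u j)) * x)))"
        by (simp only: comb)
      finally show "chi (g x + tr n (a * x)) * (2 ^ \<tau> * chi (?e x)) =
          (\<Sum>S\<in>?P. \<Sum>T\<in>?P. ?K T S * chi (g x + tr n ((a + (\<Sum>j\<in>S. u j)) * x)))" .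
    qed
    also have "\<dots> = (\<Sum>S\<in>?P. \<Sum>x\<in>UNIV. \<Sum>T\<in>?P. ?K T S * chi (g x + tr n ((a + (\<Sum>j\<in>S. u j)) * x)))"
      by (rule sum.swap)
    also have "\<dots> = (\<Sum>S\<in>?P. \<Sum>T\<in>?P. \<Sum>x\<in>UNIV. ?K T S * chi (g x + tr n ((a + (\<Sum>j\<in>S. u j)) * x)))"
      by (rule sum.cong[OF refl], rule sum.swap)
    also have "\<dots> = (\<Sum>S\<in>?P. \<Sum>T\<in>?P. ?K T S * walsh n g (a + (\<Sum>j\<in>S. u j)))"
      by (simp add: walsh_chi sum_distrib_left)
    also have "\<dots> = (\<Sum>S\<in>?P. \<Sum>T\<in>?P. ?K T S * (2 ^ hh * (chi (gs a) * chi (\<Sum>i\<in>S. \<delta> i))))"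
    proof (rule sum.cong[OF refl])
      fix S assume S: "S \<in> ?P"
      then have fS: "finite S" using finite_subset by auto
      have s01: "(\<Sum>i\<in>S. \<delta> i) \<in> {0,1}" using sum01[OF h fS, of \<delta>] \<delta>01 S by auto
      have "walsh n g (a + (\<Sum>j\<in>S. u j)) = 2 ^ hh * (chi (gs a) * chi (\<Sum>i\<in>S. \<delta> i))"
        unfolding W lin[OF S] using chi_add[OF h gs01 s01] by simp
      then show "(\<Sum>T\<in>?P. ?K T S * walsh n g (a + (\<Sum>j\<in>S. u j))) =
          (\<Sum>T\<in>?P. ?K T S * (2 ^ hh * (chi (gs a) * chi (\<Sum>i\<in>S. \<delta> i))))" by simp
    qed
    also have "\<dots> = 2 ^ hh * chi (gs a) * (\<Sum>S\<in>?P. \<Sum>T\<in>?P. ?K T S * chi (\<Sum>i\<in>S. \<delta> i))"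
      by (simp add: sum_distrib_left ac_simps)
    also have "\<dots> = 2 ^ hh * chi (gs a) * (2 ^ \<tau> * chi (eval_reduced \<tau> c \<delta>))"
      using expansion[OF h \<delta>01, of c] by simp
    finally have "walsh n (\<lambda>x. g x + ?e x) a = 2 ^ hh * chi (gs a) * chi (eval_reduced \<tau> c \<delta>)"
      by simp
    then show ?thesis by (simp add: abs_mult chi_abs hh_def)
  qed
  then show ?thesis using bf unfolding bent_def by blast
qed

theorem corollary3:
  fixes n m k \<tau> :: nat
    and u :: "nat \<Rightarrow> 'a::{field,finite}"
    and c :: "nat set \<Rightarrow> 'a"
    and G :: "'a \<Rightarrow> 'a"
  assumes card: "card (UNIV :: 'a set) = 2 ^ n"
    and char: "CHAR('a) = 2"
    and n_def: "n = 2 * k" and n_pos: "0 < n"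
    and m_pos: "0 < m" and m_dvd: "m dvd n"
    and tau: "1 \<le> \<tau>" "\<tau> \<le> k"
    and u_distinct: "inj_on u {1..\<tau>}"
    and F_red: "reduced_poly \<tau> c"
    and G_vb: "vectorial_bent n m G"
    and G_dual: "\<forall>l\<in>subfield2 m - {0}. tr m l = 1 \<longrightarrow>
        (\<forall>i j. 1 \<le> i \<and> i < j \<and> j \<le> \<tau> \<longrightarrow>
           (\<forall>x. second_deriv (dual n (component m G l)) (u i) (u j) x = 0))"
  shows "vectorial_bent n m (\<lambda>x. G x + eval_reduced \<tau> c (\<lambda>i. tr n (u i * x)))"
proof -
  have h: "(1::'a) + 1 = 0" using of_nat_CHAR[where 'a='a] char by simp
  have frob: "\<forall>x::'a. x ^ (2 ^ n) = x" using fin_pow_card[where 'a='a] card by simp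
  have L01: "tr n (v * x :: 'a) \<in> {0,1}" for x v using tr_idem[OF h, of "v * x" n] frob by simp
  have e01: "eval_reduced \<tau> c (\<lambda>i. tr n (u i * x)) \<in> {0,1}" for x
    using eval01[OF h F_red, of "\<lambda>i. tr n (u i * x)"] L01 by simp
  have Gsub: "G x ^ (2 ^ m) = G x" for x
    using G_vb unfolding vectorial_bent_def subfield2_def by blast
  have sub: "\<forall>x. G x + eval_reduced \<tau> c (\<lambda>i. tr n (u i * x)) \<in> subfield2 m"
  proof
    fix x
    have "(eval_reduced \<tau> c (\<lambda>i. tr n (u i * x))) ^ (2 ^ m) = eval_reduced \<tau> c (\<lambda>i. tr n (u i * x))"
      using e01[of x] by auto
    then show "G x + eval_reduced \<tau> c (\<lambda>i. tr n (u i * x)) \<in> subfield2 m"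
      unfolding subfield2_def using pow2_add[OF h] Gsub by simp
  qed
  have comps: "bent n (component m (\<lambda>x. G x + eval_reduced \<tau> c (\<lambda>i. tr n (u i * x))) l)"
    if l: "l \<in> subfield2 m - {0}" for l
  proof -
    have lfix: "l ^ (2 ^ m) = l" using l unfolding subfield2_def by auto
    have trl: "tr m l \<in> {0,1}" using tr_idem[OF h lfix] .
    have comp: "component m (\<lambda>x. G x + eval_reduced \<tau> c (\<lambda>i. tr n (u i * x))) l x =
        component m G l x + eval_reduced \<tau> c (\<lambda>i. tr n (u i * x)) * tr m l" for x
    proof -
      have "tr m (l * eval_reduced \<tau> c (\<lambda>i. tr n (u i * x))) = eval_reduced \<tau> c (\<lambda>i. tr n (u i * x)) * tr m l"
        using e01[of x] tr_zero[where 'a='a] by auto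
      then show ?thesis unfolding component_def by (simp add: distrib_left tr_add[OF h])
    qed
    show ?thesis
    proof (cases "tr m l = 0")
      case True
      then have "component m (\<lambda>x. G x + eval_reduced \<tau> c (\<lambda>i. tr n (u i * x))) l = component m G l"
        using comp by (simp add: fun_eq_iff)
      then show ?thesis using G_vb l unfolding vectorial_bent_def by simp
    next
      case False
      then have t1: "tr m l = 1" using trl by auto
      then have eq: "component m (\<lambda>x. G x + eval_reduced \<tau> c (\<lambda>i. tr n (u i * x))) l =
          (\<lambda>x. component m G l x + eval_reduced \<tau> c (\<lambda>i. tr n (u i * x)))"
        using comp by (simp add: fun_eq_iff)
      have gb: "bent n (component m G l)" using G_vb l unfolding vectorial_bent_def by simp
      have dd: "\<forall>i j. 1 \<le> i \<and> i < j \<and> j \<le> \<tau> \<longrightarrow>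
           (\<forall>x. second_deriv (dual n (component m G l)) (u i) (u j) x = 0)"
        using G_dual l t1 by blast
      show ?thesis unfolding eq by (rule main_bent[OF h frob gb dd F_red])
    qed
  qed
  show ?thesis unfolding vectorial_bent_def using sub comps by blast
qed

end
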